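(* For any sets $X,Y$ and any $f:X\to\mathcal W(Y)$, the map $f^\dagger:\mathcal W(X)\to\mathcal W(Y)$ is a total function; that is, for every $m\in\mathcal W(X)$ the sums defining $f^\dagger(m)$ are defined and $f^\dagger(m)\in\mathcal W(Y)$.
   Context: $\mathcal A=\langle U,+,\cdot,\mathbf 0,\mathbf 1\rangle$ is a partial semiring ($+$ commutative, associative, possibly partial, unit $\mathbf 0$; $\cdot$ total, associative, unit $\mathbf 1$; two-sided distributivity; $\mathbf 0$ annihilates), naturally ordered ($u\le v$ iff $\exists w.\,u+w=v$ is a partial order), Scott continuous ($+$ and $\cdot$ preserve suprema of directed sets in each argument), with a top element. Infinite sums are suprema of finite partial sums. $\mathcal W(X)$ is the set of $m:X\to U$ whose support $\mathrm{supp}(m)=\{x:m(x)\ne\mathbf 0\}$ is countable and whose mass $|m|=\sum_{x\in\mathrm{supp}(m)}m(x)$ is defined. $f^\dagger(m)(y)=\sum_{x\in\mathrm{supp}(m)}m(x)\cdot f(x)(y)$. *)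

theory Defs
  imports Main "HOL-Library.Countable_Set"
begin

text \<open>A partial semiring is given by a partial addition padd (None = undefined),
  a total multiplication mult, and constants zero, one on a carrier type 'u.\<close>

definition nat_le :: "('u \<Rightarrow> 'u \<Rightarrow> 'u option) \<Rightarrow> 'u \<Rightarrow> 'u \<Rightarrow> bool" where
  "nat_le padd u v \<longleftrightarrow> (\<exists>w. padd u w = Some v)"

definition is_lub_in :: "('u \<Rightarrow> 'u \<Rightarrow> bool) \<Rightarrow> 'u set \<Rightarrow> 'u \<Rightarrow> bool" where
  "is_lub_in le D s \<longleftrightarrow> (\<forall>d\<in>D. le d s) \<and> (\<forall>b. (\<forall>d\<in>D. le d b) \<longrightarrow> le s b)"

definition directed_in :: "('u \<Rightarrow> 'u \<Rightarrow> bool) \<Rightarrow> 'u set \<Rightarrow> bool" where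
  "directed_in le D \<longleftrightarrow> D \<noteq> {} \<and> (\<forall>a\<in>D. \<forall>b\<in>D. \<exists>c\<in>D. le a c \<and> le b c)"

definition partial_semiring ::
  "('u \<Rightarrow> 'u \<Rightarrow> 'u option) \<Rightarrow> ('u \<Rightarrow> 'u \<Rightarrow> 'u) \<Rightarrow> 'u \<Rightarrow> 'u \<Rightarrow> bool" where
  "partial_semiring padd mult zero one \<longleftrightarrow>
     (\<forall>x y. padd x y = padd y x) \<and>
     (\<forall>x y z. Option.bind (padd x y) (\<lambda>a. padd a z) = Option.bind (padd y z) (\<lambda>b. padd x b)) \<and>
     (\<forall>x. padd zero x = Some x) \<and>
     (\<forall>x y z. mult (mult x y) z = mult x (mult y z)) \<and>
     (\<forall>x. mult one x = x \<and> mult x one = x) \<and>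
     (\<forall>x y z s. padd y z = Some s \<longrightarrow>
         padd (mult x y) (mult x z) = Some (mult x s) \<and>
         padd (mult y x) (mult z x) = Some (mult s x)) \<and>
     (\<forall>x. mult zero x = zero \<and> mult x zero = zero)"

definition naturally_ordered :: "('u \<Rightarrow> 'u \<Rightarrow> 'u option) \<Rightarrow> bool" where
  "naturally_ordered padd \<longleftrightarrow>
     (\<forall>u v. nat_le padd u v \<and> nat_le padd v u \<longrightarrow> u = v)"

definition scott_continuous ::
  "('u \<Rightarrow> 'u \<Rightarrow> 'u option) \<Rightarrow> ('u \<Rightarrow> 'u \<Rightarrow> 'u) \<Rightarrow> bool" where
  "scott_continuous padd mult \<longleftrightarrow>
     (\<forall>D. directed_in (nat_le padd) D \<longrightarrow> (\<exists>s. is_lub_in (nat_le padd) D s)) \<and>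
     (\<forall>D s x. directed_in (nat_le padd) D \<longrightarrow> is_lub_in (nat_le padd) D s \<longrightarrow>
        ((\<forall>d\<in>D. padd x d \<noteq> None) \<longrightarrow>
           (\<exists>t. padd x s = Some t \<and> is_lub_in (nat_le padd) {the (padd x d) | d. d \<in> D} t)) \<and>
        is_lub_in (nat_le padd) ((\<lambda>d. mult x d) ` D) (mult x s) \<and>
        is_lub_in (nat_le padd) ((\<lambda>d. mult d x) ` D) (mult s x))"

definition has_top :: "('u \<Rightarrow> 'u \<Rightarrow> 'u option) \<Rightarrow> bool" where
  "has_top padd \<longleftrightarrow> (\<exists>t. \<forall>u. nat_le padd u t)"

definition cont_partial_semiring ::
  "('u \<Rightarrow> 'u \<Rightarrow> 'u option) \<Rightarrow> ('u \<Rightarrow> 'u \<Rightarrow> 'u) \<Rightarrow> 'u \<Rightarrow> 'u \<Rightarrow> bool" where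
  "cont_partial_semiring padd mult zero one \<longleftrightarrow>
     partial_semiring padd mult zero one \<and> naturally_ordered padd \<and>
     scott_continuous padd mult \<and> has_top padd"

text \<open>Finite sums along a list, and over a finite set (order irrelevant by
  commutativity/associativity).\<close>
fun psum_list :: "('u \<Rightarrow> 'u \<Rightarrow> 'u option) \<Rightarrow> 'u \<Rightarrow> ('x \<Rightarrow> 'u) \<Rightarrow> 'x list \<Rightarrow> 'u option" where
  "psum_list padd zero g [] = Some zero"
| "psum_list padd zero g (x # xs) = Option.bind (psum_list padd zero g xs) (padd (g x))"

definition fsum :: "('u \<Rightarrow> 'u \<Rightarrow> 'u option) \<Rightarrow> 'u \<Rightarrow> ('x \<Rightarrow> 'u) \<Rightarrow> 'x set \<Rightarrow> 'u option" where
  "fsum padd zero g F = psum_list padd zero g (SOME xs. distinct xs \<and> set xs = F)"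

definition has_psum :: "('u \<Rightarrow> 'u \<Rightarrow> 'u option) \<Rightarrow> 'u \<Rightarrow> ('x \<Rightarrow> 'u) \<Rightarrow> 'x set \<Rightarrow> 'u \<Rightarrow> bool" where
  "has_psum padd zero g S s \<longleftrightarrow>
     (\<forall>F. finite F \<and> F \<subseteq> S \<longrightarrow> fsum padd zero g F \<noteq> None) \<and>
     is_lub_in (nat_le padd) {the (fsum padd zero g F) | F. finite F \<and> F \<subseteq> S} s"

definition supp :: "'u \<Rightarrow> ('x \<Rightarrow> 'u) \<Rightarrow> 'x set" where
  "supp zero m = {x. m x \<noteq> zero}"

definition weightings :: "('u \<Rightarrow> 'u \<Rightarrow> 'u option) \<Rightarrow> 'u \<Rightarrow> ('x \<Rightarrow> 'u) set" where
  "weightings padd zero = {m. countable (supp zero m) \<and> (\<exists>s. has_psum padd zero m (supp zero m) s)}"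

end

theory Submission
  imports Defs
begin

definition oadd :: "('u \<Rightarrow> 'u \<Rightarrow> 'u option) \<Rightarrow> 'u option \<Rightarrow> 'u option \<Rightarrow> 'u option" where
  "oadd padd a b = (case a of None \<Rightarrow> None | Some x \<Rightarrow> (case b of None \<Rightarrow> None | Some y \<Rightarrow> padd x y))"

lemma oadd_simps[simp]:
  "oadd padd None b = None" "oadd padd a None = None" "oadd padd (Some x) (Some y) = padd x y"
  by (auto simp: oadd_def split: option.splits)

locale cps =
  fixes padd :: "'u \<Rightarrow> 'u \<Rightarrow> 'u option" and mult :: "'u \<Rightarrow> 'u \<Rightarrow> 'u" and zero one :: 'u
  assumes cps: "cont_partial_semiring padd mult zero one"
begin

lemma comm: "padd x y = padd y x"
  using cps unfolding cont_partial_semiring_def partial_semiring_def by blast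
lemma assoc: "Option.bind (padd x y) (\<lambda>a. padd a z) = Option.bind (padd y z) (\<lambda>b. padd x b)"
  using cps unfolding cont_partial_semiring_def partial_semiring_def by blast
lemma zero_l[simp]: "padd zero x = Some x"
  using cps unfolding cont_partial_semiring_def partial_semiring_def by blast
lemma zero_r[simp]: "padd x zero = Some x"
  using comm zero_l by metis
lemma distrib: "padd y z = Some s \<Longrightarrow>
         padd (mult x y) (mult x z) = Some (mult x s) \<and>
         padd (mult y x) (mult z x) = Some (mult s x)"
  using cps unfolding cont_partial_semiring_def partial_semiring_def by blast
lemma mult_zero[simp]: "mult zero x = zero" "mult x zero = zero"
  using cps unfolding cont_partial_semiring_def partial_semiring_def by blast+
lemma antisym: "nat_le padd u v \<Longrightarrow> nat_le padd v u \<Longrightarrow> u = v"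
  using cps unfolding cont_partial_semiring_def naturally_ordered_def by blast
lemma has_lub: "directed_in (nat_le padd) D \<Longrightarrow> \<exists>s. is_lub_in (nat_le padd) D s"
  using cps unfolding cont_partial_semiring_def scott_continuous_def by blast
lemma cont_add: "directed_in (nat_le padd) D \<Longrightarrow> is_lub_in (nat_le padd) D s \<Longrightarrow>
   (\<forall>d\<in>D. padd x d \<noteq> None) \<Longrightarrow> padd x s \<noteq> None"
  using cps unfolding cont_partial_semiring_def scott_continuous_def by blast
lemma top: "\<exists>t. \<forall>u. nat_le padd u t"
  using cps unfolding cont_partial_semiring_def has_top_def by blast

lemma oadd_comm: "oadd padd a b = oadd padd b a"
  by (cases a; cases b) (auto simp: comm)

lemma oadd_assoc: "oadd padd (oadd padd a b) c = oadd padd a (oadd padd b c)"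
proof (cases a; cases b; cases c)
  fix x y z assume "a = Some x" "b = Some y" "c = Some z"
  then show ?thesis using assoc[of x y z]
    by (cases "padd x y"; cases "padd y z") auto
qed auto

lemma oadd_zero: "oadd padd a (Some zero) = a"
  by (cases a) auto

lemma oadd_zero': "oadd padd (Some zero) a = a"
  by (cases a) auto

sublocale S: comm_monoid_list_set "oadd padd" "Some zero"
  by unfold_locales (rule oadd_assoc oadd_comm oadd_zero oadd_zero')+


abbreviation SF :: "('x \<Rightarrow> 'u option) \<Rightarrow> 'x set \<Rightarrow> 'u option" where
  "SF \<equiv> S.set.F"

lemma oadd_lc: "oadd padd a (oadd padd b c) = oadd padd b (oadd padd a c)"
  by (metis oadd_assoc oadd_comm)

lemmas oadd_ac = oadd_assoc oadd_comm oadd_lc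

lemma bind_oadd: "Option.bind P (padd a) = oadd padd (Some a) P"
  by (cases P) auto

lemma psum_list_eq: "psum_list padd zero g xs = S.list.F (map (\<lambda>x. Some (g x)) xs)"
  by (induct xs) (auto simp: bind_oadd)

lemma fsum_eq: "finite A \<Longrightarrow> fsum padd zero g A = SF (\<lambda>x. Some (g x)) A"
proof -
  assume "finite A"
  then have ex: "\<exists>xs. distinct xs \<and> set xs = A" using finite_distinct_list by blast
  define xs where "xs = (SOME xs. distinct xs \<and> set xs = A)"
  have xs: "distinct xs \<and> set xs = A" unfolding xs_def using someI_ex[OF ex] .
  have "fsum padd zero g A = psum_list padd zero g xs" unfolding fsum_def xs_def ..
  also have "\<dots> = S.list.F (map (\<lambda>x. Some (g x)) xs)" by (rule psum_list_eq)
  also have "\<dots> = SF (\<lambda>x. Some (g x)) A" using xs S.distinct_set_conv_list by metis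
  finally show ?thesis .
qed

definition ole :: "'u option \<Rightarrow> 'u option \<Rightarrow> bool" where
  "ole x y \<longleftrightarrow> (\<exists>w. oadd padd x w = y)"

lemma ole_refl: "ole x x"
  unfolding ole_def using oadd_zero by blast

lemma ole_trans: "ole x y \<Longrightarrow> ole y z \<Longrightarrow> ole x z"
  unfolding ole_def by (metis oadd_assoc)

lemma ole_add: "ole x y \<Longrightarrow> ole (oadd padd x z) (oadd padd y z)"
  unfolding ole_def by (metis oadd_ac)

lemma ole_add2: "ole x y \<Longrightarrow> ole x' y' \<Longrightarrow> ole (oadd padd x x') (oadd padd y y')"
  by (metis ole_add ole_trans oadd_comm)

lemma ole_addI: "ole x (oadd padd x w)" "ole x (oadd padd w x)"
  unfolding ole_def by (metis oadd_comm)+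

lemma ole_defined: "ole x (Some b) \<Longrightarrow> x \<noteq> None"
  unfolding ole_def by (cases x) auto

lemma ole_defined': "ole x y \<Longrightarrow> y \<noteq> None \<Longrightarrow> x \<noteq> None"
  using ole_defined by blast

lemma ole_Some: "ole (Some a) (Some b) \<longleftrightarrow> nat_le padd a b"
  unfolding ole_def nat_le_def
  by (metis oadd_simps(2,3) option.distinct(1) option.exhaust)

lemma SF_mono: "finite A \<Longrightarrow> (\<forall>i\<in>A. ole (a i) (b i)) \<Longrightarrow> ole (SF a A) (SF b A)"
  by (induct A rule: finite_induct) (auto simp: ole_refl intro: ole_add2)

lemma SF_subset: "finite B \<Longrightarrow> A \<subseteq> B \<Longrightarrow> ole (SF a A) (SF a B)"
  using S.set.subset_diff[of A B a] ole_addI(2) by metis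

lemma zero_le: "nat_le padd zero a"
  unfolding nat_le_def by simp

lemma mult_mono: "nat_le padd a b \<Longrightarrow> nat_le padd (mult c a) (mult c b)"
  unfolding nat_le_def using distrib by blast

lemma SF_mult_left: "finite A \<Longrightarrow> SF (\<lambda>i. Some (h i)) A = Some s \<Longrightarrow>
    SF (\<lambda>i. Some (mult c (h i))) A = Some (mult c s)"
proof (induct A arbitrary: s rule: finite_induct)
  case empty
  then have "s = zero" by simp
  then show ?case by simp
next
  case (insert x F)
  then obtain s' where s': "SF (\<lambda>i. Some (h i)) F = Some s'" "padd (h x) s' = Some s"
    by (cases "SF (\<lambda>i. Some (h i)) F") auto
  then show ?case using insert distrib[OF s'(2)] by simp
qed

lemma SF_mult_right: "finite A \<Longrightarrow> SF (\<lambda>i. Some (h i)) A = Some s \<Longrightarrow>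
    SF (\<lambda>i. Some (mult (h i) c)) A = Some (mult s c)"
proof (induct A arbitrary: s rule: finite_induct)
  case empty
  then have "s = zero" by simp
  then show ?case by simp
next
  case (insert x F)
  then obtain s' where s': "SF (\<lambda>i. Some (h i)) F = Some s'" "padd (h x) s' = Some s"
    by (cases "SF (\<lambda>i. Some (h i)) F") auto
  then show ?case using insert distrib[OF s'(2)] by simp
qed

lemma directed_sums:
  assumes "\<forall>F. finite F \<and> F \<subseteq> S \<longrightarrow> SF (\<lambda>i. Some (h i)) F \<noteq> None"
  shows "directed_in (nat_le padd) {the (fsum padd zero h F) | F. finite F \<and> F \<subseteq> S}"
  unfolding directed_in_def
proof (intro conjI ballI)
  show "{the (fsum padd zero h F) | F. finite F \<and> F \<subseteq> S} \<noteq> {}" by blast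
next
  fix a b assume "a \<in> {the (fsum padd zero h F) | F. finite F \<and> F \<subseteq> S}"
    "b \<in> {the (fsum padd zero h F) | F. finite F \<and> F \<subseteq> S}"
  then obtain F1 F2 where F: "a = the (fsum padd zero h F1)" "finite F1" "F1 \<subseteq> S"
    "b = the (fsum padd zero h F2)" "finite F2" "F2 \<subseteq> S" by blast
  let ?c = "the (fsum padd zero h (F1 \<union> F2))"
  have d: "\<And>F. finite F \<Longrightarrow> F \<subseteq> S \<Longrightarrow> fsum padd zero h F = Some (the (fsum padd zero h F))"
    using assms fsum_eq by fastforce
  have "ole (fsum padd zero h F1) (fsum padd zero h (F1 \<union> F2))"
    "ole (fsum padd zero h F2) (fsum padd zero h (F1 \<union> F2))"
    using F fsum_eq SF_subset by (metis finite_UnI sup_ge1 sup_ge2)+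
  then have "nat_le padd a ?c" "nat_le padd b ?c"
    using d F ole_Some by (metis Un_least finite_UnI)+
  moreover have "?c \<in> {the (fsum padd zero h F) | F. finite F \<and> F \<subseteq> S}" using F by blast
  ultimately show "\<exists>c\<in>{the (fsum padd zero h F) | F. finite F \<and> F \<subseteq> S}.
     nat_le padd a c \<and> nat_le padd b c" by blast
qed

lemma exists_psum:
  assumes "\<forall>F. finite F \<and> F \<subseteq> S \<longrightarrow> SF (\<lambda>i. Some (h i)) F \<noteq> None"
  shows "\<exists>s. has_psum padd zero h S s"
proof -
  have "\<forall>F. finite F \<and> F \<subseteq> S \<longrightarrow> fsum padd zero h F \<noteq> None"
    using assms by (auto simp: fsum_eq)
  then show ?thesis using has_lub[OF directed_sums[OF assms]] unfolding has_psum_def by blast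
qed

lemma wsum_any:
  assumes "h \<in> weightings padd zero" "finite G"
  shows "SF (\<lambda>y. Some (h y)) G \<noteq> None"
proof -
  have "SF (\<lambda>y. Some (h y)) G = SF (\<lambda>y. Some (h y)) (G \<inter> supp zero h)"
    by (rule S.set.mono_neutral_right) (auto simp: assms supp_def)
  also have "\<dots> = fsum padd zero h (G \<inter> supp zero h)"
    by (rule fsum_eq[symmetric]) (simp add: assms)
  also have "\<dots> \<noteq> None" using assms unfolding weightings_def has_psum_def by auto
  finally show ?thesis .
qed

lemma lub_unique: "is_lub_in (nat_le padd) D s \<Longrightarrow> is_lub_in (nat_le padd) D t \<Longrightarrow> s = t"
  unfolding is_lub_in_def using antisym by blast


context
  fixes f :: "'x \<Rightarrow> 'y \<Rightarrow> 'u" and m :: "'x \<Rightarrow> 'u"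
  assumes fw: "\<forall>x. f x \<in> weightings padd zero"
    and mw: "m \<in> weightings padd zero"
begin

definition A :: "'x set \<Rightarrow> 'y \<Rightarrow> 'u option" where
  "A F y = SF (\<lambda>x. Some (mult (m x) (f x y))) F"

lemma bound:
  assumes "finite G" "finite F" "F \<subseteq> supp zero m"
  shows "SF (\<lambda>y. A F y) G \<noteq> None"
proof -
  obtain Tp where Tp: "\<And>u. nat_le padd u Tp" using top by blast
  have "SF (\<lambda>y. A F y) G = SF (\<lambda>x. SF (\<lambda>y. Some (mult (m x) (f x y))) G) F"
    unfolding A_def by (rule S.set.swap[symmetric])
  also have "ole \<dots> (SF (\<lambda>x. Some (mult (m x) Tp)) F)"
  proof (rule SF_mono[OF assms(2)], rule ballI)
    fix x assume "x \<in> F"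
    obtain sx where sx: "SF (\<lambda>y. Some (f x y)) G = Some sx"
      using wsum_any[OF fw[rule_format] assms(1)] by blast
    have "SF (\<lambda>y. Some (mult (m x) (f x y))) G = Some (mult (m x) sx)"
      by (rule SF_mult_left[OF assms(1) sx])
    then show "ole (SF (\<lambda>y. Some (mult (m x) (f x y))) G) (Some (mult (m x) Tp))"
      using Tp by (simp add: ole_Some mult_mono)
  qed
  finally have le: "ole (SF (\<lambda>y. A F y) G) (SF (\<lambda>x. Some (mult (m x) Tp)) F)" .
  have "fsum padd zero m F \<noteq> None" using mw assms unfolding weightings_def has_psum_def by blast
  then obtain M where "SF (\<lambda>x. Some (m x)) F = Some M" using fsum_eq assms by fastforce
  then have "SF (\<lambda>x. Some (mult (m x) Tp)) F = Some (mult M Tp)"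
    by (rule SF_mult_right[OF assms(2)])
  then show ?thesis using le ole_defined by simp
qed

lemma A_single: "finite F \<Longrightarrow> F \<subseteq> supp zero m \<Longrightarrow> A F y \<noteq> None"
  using bound[of "{y}" F] by (simp add: oadd_zero)

definition g :: "'y \<Rightarrow> 'u" where
  "g y = (SOME s. has_psum padd zero (\<lambda>x. mult (m x) (f x y)) (supp zero m) s)"

lemma g_psum: "has_psum padd zero (\<lambda>x. mult (m x) (f x y)) (supp zero m) (g y)"
proof -
  have "\<exists>s. has_psum padd zero (\<lambda>x. mult (m x) (f x y)) (supp zero m) s"
    by (rule exists_psum) (use A_single in \<open>auto simp: A_def\<close>)
  then show ?thesis unfolding g_def by (rule someI_ex)
qed

definition D :: "'y \<Rightarrow> 'u set" where
  "D y = {the (fsum padd zero (\<lambda>x. mult (m x) (f x y)) F) | F. finite F \<and> F \<subseteq> supp zero m}"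

lemma D_alt: "D y = {the (A F y) | F. finite F \<and> F \<subseteq> supp zero m}"
proof -
  have e: "\<And>F. finite F \<Longrightarrow> the (fsum padd zero (\<lambda>x. mult (m x) (f x y)) F) = the (A F y)"
    unfolding A_def by (simp add: fsum_eq)
  show ?thesis unfolding D_def
    by (rule Collect_cong) (metis e)
qed

lemma g_lub: "is_lub_in (nat_le padd) (D y) (g y)"
  using g_psum unfolding has_psum_def D_def by blast

lemma D_dir: "directed_in (nat_le padd) (D y)"
  unfolding D_def by (rule directed_sums) (use A_single in \<open>auto simp: A_def\<close>)

lemma claim:
  "finite G \<Longrightarrow> \<forall>c. (\<forall>F. finite F \<and> F \<subseteq> supp zero m \<longrightarrow> oadd padd c (SF (\<lambda>y. A F y) G) \<noteq> None)
     \<longrightarrow> oadd padd c (SF (\<lambda>y. Some (g y)) G) \<noteq> None"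
proof (induct G rule: finite_induct)
  case empty
  show ?case
  proof (intro allI impI)
    fix c
    assume "\<forall>F. finite F \<and> F \<subseteq> supp zero m \<longrightarrow> oadd padd c (SF (\<lambda>y. A F y) {}) \<noteq> None"
    then have "oadd padd c (SF (\<lambda>y. A {} y) {}) \<noteq> None" by blast
    then show "oadd padd c (SF (\<lambda>y. Some (g y)) {}) \<noteq> None" by simp
  qed
next
  case (insert y0 G)
  show ?case
  proof (intro allI impI)
    fix c
    assume H0: "\<forall>F. finite F \<and> F \<subseteq> supp zero m \<longrightarrow> oadd padd c (SF (\<lambda>y. A F y) (insert y0 G)) \<noteq> None"
    let ?c' = "oadd padd c (Some (g y0))"
    have H: "oadd padd c (oadd padd (A F y0) (SF (\<lambda>y. A F y) G)) \<noteq> None"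
      if "finite F" "F \<subseteq> supp zero m" for F
    proof -
      have "SF (\<lambda>y. A F y) (insert y0 G) = oadd padd (A F y0) (SF (\<lambda>y. A F y) G)"
        by (rule S.set.insert[OF insert(1,2)])
      then show ?thesis using H0[rule_format, of F] that by simp
    qed
    have HF: "oadd padd ?c' (SF (\<lambda>y. A F0 y) G) \<noteq> None"
      if F0: "finite F0" "F0 \<subseteq> supp zero m" for F0
    proof -
      let ?X = "SF (\<lambda>y. A F0 y) G"
      have "ole (oadd padd c ?X) (oadd padd c (oadd padd (A F0 y0) ?X))"
        by (rule ole_add2[OF ole_refl ole_addI(2)])
      then have "oadd padd c ?X \<noteq> None" using H[OF F0] ole_defined' by blast
      then obtain xv where xv: "oadd padd c ?X = Some xv" by blast
      have "padd xv d \<noteq> None" if "d \<in> D y0" for d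
      proof -
        obtain F where F: "finite F" "F \<subseteq> supp zero m" "d = the (A F y0)"
          using \<open>d \<in> D y0\<close> unfolding D_alt by blast
        have Ad: "A F y0 = Some d" using A_single[OF F(1,2)] F(3) by auto
        let ?F1 = "F \<union> F0"
        have F1: "finite ?F1" "?F1 \<subseteq> supp zero m" using F F0 by auto
        have "ole (A F y0) (A ?F1 y0)" unfolding A_def by (rule SF_subset) (use F1 in auto)
        moreover have "ole ?X (SF (\<lambda>y. A ?F1 y) G)"
        proof (rule SF_mono[OF insert(1)], rule ballI)
          fix y assume "y \<in> G"
          show "ole (A F0 y) (A ?F1 y)" unfolding A_def by (rule SF_subset) (use F1 in auto)
        qed
        ultimately have "ole (oadd padd c (oadd padd (A F y0) ?X))
             (oadd padd c (oadd padd (A ?F1 y0) (SF (\<lambda>y. A ?F1 y) G)))"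
          by (rule ole_add2[OF ole_refl ole_add2])
        then have "oadd padd c (oadd padd (A F y0) ?X) \<noteq> None"
          using H[OF F1] ole_defined' by blast
        moreover have "oadd padd c (oadd padd (A F y0) ?X) = oadd padd (oadd padd c ?X) (A F y0)"
          by (simp only: oadd_ac)
        ultimately show ?thesis using xv Ad by simp
      qed
      then have "padd xv (g y0) \<noteq> None" using cont_add[OF D_dir g_lub] by blast
      then have "oadd padd (oadd padd c ?X) (Some (g y0)) \<noteq> None" using xv by simp
      moreover have "oadd padd (oadd padd c ?X) (Some (g y0)) = oadd padd ?c' ?X"
        by (simp only: oadd_ac)
      ultimately show ?thesis by simp
    qed
    have "\<forall>F. finite F \<and> F \<subseteq> supp zero m \<longrightarrow> oadd padd ?c' (SF (\<lambda>y. A F y) G) \<noteq> None"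
      using HF by blast
    then have "oadd padd ?c' (SF (\<lambda>y. Some (g y)) G) \<noteq> None" using insert(3) by blast
    moreover have "oadd padd ?c' (SF (\<lambda>y. Some (g y)) G) = oadd padd c (SF (\<lambda>y. Some (g y)) (insert y0 G))"
      unfolding S.set.insert[OF insert(1,2)] by (simp only: oadd_ac)
    ultimately show "oadd padd c (SF (\<lambda>y. Some (g y)) (insert y0 G)) \<noteq> None" by simp
  qed
qed

lemma g_sums: "finite G \<Longrightarrow> SF (\<lambda>y. Some (g y)) G \<noteq> None"
proof -
  assume G: "finite G"
  have "\<forall>F. finite F \<and> F \<subseteq> supp zero m \<longrightarrow> oadd padd (Some zero) (SF (\<lambda>y. A F y) G) \<noteq> None"
    using bound[OF G] by (simp add: oadd_zero')
  then have "oadd padd (Some zero) (SF (\<lambda>y. Some (g y)) G) \<noteq> None"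
    using claim[OF G] by blast
  then show ?thesis by (simp add: oadd_zero')
qed

lemma g_zero: "(\<forall>x\<in>supp zero m. f x y = zero) \<Longrightarrow> g y = zero"
proof -
  assume z: "\<forall>x\<in>supp zero m. f x y = zero"
  have "A F y = Some zero" if "F \<subseteq> supp zero m" for F
    unfolding A_def using z that by (intro S.set.neutral) auto
  have "D y = {zero}"
  proof
    show "D y \<subseteq> {zero}"
    proof
      fix d assume "d \<in> D y"
      then obtain F where "finite F" "F \<subseteq> supp zero m" "d = the (A F y)" unfolding D_alt by blast
      then show "d \<in> {zero}" using \<open>\<And>F. F \<subseteq> supp zero m \<Longrightarrow> A F y = Some zero\<close> by simp
    qed
    have "zero = the (A {} y)" by (simp add: A_def)
    then show "{zero} \<subseteq> D y" unfolding D_alt by blast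
  qed
  then have "is_lub_in (nat_le padd) {zero} (g y)" using g_lub[of y] by metis
  moreover have "is_lub_in (nat_le padd) {zero} zero"
    unfolding is_lub_in_def using zero_le by auto
  ultimately show ?thesis by (rule lub_unique)
qed

lemma g_weighting: "g \<in> weightings padd zero"
proof -
  have "supp zero g \<subseteq> (\<Union>x\<in>supp zero m. supp zero (f x))"
    using g_zero unfolding supp_def by blast
  moreover have "countable (\<Union>x\<in>supp zero m. supp zero (f x))"
    using fw mw unfolding weightings_def by auto
  ultimately have "countable (supp zero g)" by (rule countable_subset)
  moreover have "\<exists>s. has_psum padd zero g (supp zero g) s"
    by (rule exists_psum) (use g_sums in auto)
  ultimately show ?thesis unfolding weightings_def by blast
qed

end

end



theorem lemmaA3:
  fixes padd :: "'u \<Rightarrow> 'u \<Rightarrow> 'u option" and mult :: "'u \<Rightarrow> 'u \<Rightarrow> 'u"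
    and zero one :: 'u
    and f :: "'x \<Rightarrow> 'y \<Rightarrow> 'u" and m :: "'x \<Rightarrow> 'u"
  assumes "cont_partial_semiring padd mult zero one"
    and "\<forall>x. f x \<in> weightings padd zero"
    and "m \<in> weightings padd zero"
  shows "\<exists>g :: 'y \<Rightarrow> 'u.
           (\<forall>y. has_psum padd zero (\<lambda>x. mult (m x) (f x y)) (supp zero m) (g y)) \<and>
           g \<in> weightings padd zero"
proof -
  interpret cps padd mult zero one by (rule cps.intro) (rule assms(1))
  show ?thesis using g_psum[OF assms(2,3)] g_weighting[OF assms(2,3)] by blast
qed

end
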